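(* Let $\mathbb{K}$ be an $\aleph_0$-complete field and $x=(x_1,\ldots,x_n)$. Let $F$ be a finite system of polynomial equations, with coefficients in $\mathbb{K}[\![x]\!]$, in unknowns $z_1,\ldots,z_q$ and some of their partial derivatives $\partial^{|j_1|}z_{i_1}/\partial x^{j_1},\ldots,\partial^{|j_s|}z_{i_s}/\partial x^{j_s}$, where $i_1,\ldots,i_s\in\{1,\ldots,q\}$ and $j_1,\ldots,j_s\in\mathbb{N}^n$. Then there exists a map $\tau:\mathbb{N}^{q+s}\to\mathbb{N}$ such that: if $c=(c_1,\ldots,c_q,c_{i_1,j_1},\ldots,c_{i_s,j_s})\in\mathbb{N}^{q+s}$ and $z'=(z'_1,\ldots,z'_q)\in\mathbb{K}[\![x]\!]^q$ satisfies $$F\left(z',\frac{\partial^{|j_1|}z'_{i_1}}{\partial x^{j_1}},\ldots,\frac{\partial^{|j_s|}z'_{i_s}}{\partial x^{j_s}}\right)\equiv 0 \text{ modulo } (x)^{\tau(c)},$$ $\mathrm{ord}(z'_i)=c_i$ for $i=1,\ldots,q$ and $\mathrm{ord}\left(\partial^{|j_k|}z'_{i_k}/\partial x^{j_k}\right)=c_{i_k,j_k}$ for $k=1,\ldots,s$, then there exists $z=(z_1,\ldots,z_q)\in\mathbb{K}[\![x]\!]^q$ which, together with its corresponding partial derivatives, is a solution of $F=0$ and satisfies $\mathrm{ord}(z_i)=c_i$ for all $i=1,\ldots,q$ and $\mathrm{ord}\left(\partial^{|j_k|}z_{i_k}/\partial x^{j_k}\right)=c_{i_k,j_k}$ for 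$k=1,\ldots,s$.
   Context: A field $\mathbb{K}$ is called $\aleph_0$-complete if every countable system $\mathcal S$ of polynomial equations with coefficients in $\mathbb{K}$ (in a countable number of indeterminates) has a solution in $\mathbb{K}$ if and only if every finite sub-system of $\mathcal S$ has a solution in $\mathbb{K}$. $(x)$ is the maximal ideal of $\mathbb{K}[\![x]\!]$; for $j=(j^1,\ldots,j^n)\in\mathbb{N}^n$, $|j|=j^1+\cdots+j^n$ and $\partial^{|j|}/\partial x^j$ denotes the formal partial derivative $\partial^{|j|}/\partial x_1^{j^1}\cdots\partial x_n^{j^n}$. For a power series $g$, $\mathrm{ord}(g)$ is the smallest total degree of a monomial appearing in $g$ with nonzero coefficient. *)

theory Defs
  imports Main "HOL-Library.Extended_Nat"
begin

text \<open>A polynomial in the indeterminates X_0, X_1, ... with coefficients in 'a is a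
finitely supported map from monomials (exponent functions nat => nat with finite
support) to coefficients.\<close>

definition is_cpoly :: "((nat \<Rightarrow> nat) \<Rightarrow> 'a::zero) \<Rightarrow> bool" where
  "is_cpoly p \<longleftrightarrow> finite {m. p m \<noteq> 0} \<and> (\<forall>m. p m \<noteq> 0 \<longrightarrow> finite {v. m v \<noteq> 0})"

definition cpoly_eval :: "((nat \<Rightarrow> nat) \<Rightarrow> 'a::comm_ring_1) \<Rightarrow> (nat \<Rightarrow> 'a) \<Rightarrow> 'a" where
  "cpoly_eval p u = (\<Sum>m\<in>{m. p m \<noteq> 0}. p m * (\<Prod>v\<in>{v. m v \<noteq> 0}. u v ^ m v))"

definition aleph0_complete :: "'a::field itself \<Rightarrow> bool" where
  "aleph0_complete _ \<longleftrightarrow>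
     (\<forall>S :: ((nat \<Rightarrow> nat) \<Rightarrow> 'a) set. countable S \<and> (\<forall>p\<in>S. is_cpoly p) \<longrightarrow>
        ((\<exists>u. \<forall>p\<in>S. cpoly_eval p u = 0) \<longleftrightarrow>
         (\<forall>T\<subseteq>S. finite T \<longrightarrow> (\<exists>u. \<forall>p\<in>T. cpoly_eval p u = 0))))"

text \<open>The variables x_1..x_n are indexed by a finite type 'n; a power series in
K[[x]] is a map from exponent vectors 'n => nat to coefficients.\<close>

type_synonym ('n, 'a) mps = "('n \<Rightarrow> nat) \<Rightarrow> 'a"

definition mps_zero :: "('n, 'a::zero) mps" where
  "mps_zero = (\<lambda>a. 0)"

definition mps_one :: "('n, 'a::{zero,one}) mps" where
  "mps_one = (\<lambda>a. if a = (\<lambda>_. 0) then 1 else 0)"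

definition mps_mult :: "('n::finite, 'a::comm_ring_1) mps \<Rightarrow> ('n, 'a) mps \<Rightarrow> ('n, 'a) mps" where
  "mps_mult f g = (\<lambda>a. \<Sum>b\<in>{b. \<forall>i. b i \<le> a i}. f b * g (\<lambda>i. a i - b i))"

fun mps_pow :: "('n::finite, 'a::comm_ring_1) mps \<Rightarrow> nat \<Rightarrow> ('n, 'a) mps" where
  "mps_pow f 0 = mps_one"
| "mps_pow f (Suc k) = mps_mult f (mps_pow f k)"

definition deg :: "('n::finite \<Rightarrow> nat) \<Rightarrow> nat" where
  "deg a = (\<Sum>i\<in>UNIV. a i)"

definition mps_deriv :: "('n::finite \<Rightarrow> nat) \<Rightarrow> ('n, 'a::comm_ring_1) mps \<Rightarrow> ('n, 'a) mps" where
  "mps_deriv j f = (\<lambda>a. of_nat (\<Prod>i\<in>UNIV. fact (a i + j i) div fact (a i)) * f (\<lambda>i. a i + j i))"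

definition mps_ord :: "('n::finite, 'a::zero) mps \<Rightarrow> enat" where
  "mps_ord f = (if f = mps_zero then \<infinity> else enat (LEAST d. \<exists>a. f a \<noteq> 0 \<and> deg a = d))"

text \<open>f is congruent to 0 modulo (x)^t, the t-th power of the maximal ideal.\<close>
definition mps_in_max_pow :: "('n::finite, 'a::zero) mps \<Rightarrow> nat \<Rightarrow> bool" where
  "mps_in_max_pow f t \<longleftrightarrow> (\<forall>a. deg a < t \<longrightarrow> f a = 0)"

text \<open>A polynomial in unknowns Y_0..Y_{m-1} with coefficients in K[[x]]:
finitely supported map from monomials e (exponents, zero at indices >= m) to series.\<close>

definition is_mps_poly :: "nat \<Rightarrow> ((nat \<Rightarrow> nat) \<Rightarrow> ('n, 'a::zero) mps) \<Rightarrow> bool" where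
  "is_mps_poly m P \<longleftrightarrow> finite {e. P e \<noteq> mps_zero} \<and>
     (\<forall>e. P e \<noteq> mps_zero \<longrightarrow> (\<forall>v\<ge>m. e v = 0))"

definition mps_monomial :: "nat \<Rightarrow> (nat \<Rightarrow> ('n::finite, 'a::comm_ring_1) mps) \<Rightarrow> (nat \<Rightarrow> nat) \<Rightarrow> ('n, 'a) mps" where
  "mps_monomial m y e = foldr (\<lambda>v acc. mps_mult (mps_pow (y v) (e v)) acc) [0..<m] mps_one"

definition mps_poly_eval :: "nat \<Rightarrow> ((nat \<Rightarrow> nat) \<Rightarrow> ('n::finite, 'a::comm_ring_1) mps)
    \<Rightarrow> (nat \<Rightarrow> ('n, 'a) mps) \<Rightarrow> ('n, 'a) mps" where
  "mps_poly_eval m P y = (\<lambda>a. \<Sum>e\<in>{e. P e \<noteq> mps_zero}. mps_mult (P e) (mps_monomial m y e) a)"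

text \<open>The substitution vector (z_1..z_q, d^{j_1} z_{i_1}, ..., d^{j_s} z_{i_s}), indexed from 0:
entry i < q is z i, entry q+k is mps_deriv (jj k) (z (ii k)).\<close>
definition sys_args :: "nat \<Rightarrow> (nat \<Rightarrow> nat) \<Rightarrow> (nat \<Rightarrow> 'n \<Rightarrow> nat)
    \<Rightarrow> (nat \<Rightarrow> ('n::finite, 'a::comm_ring_1) mps) \<Rightarrow> nat \<Rightarrow> ('n, 'a) mps" where
  "sys_args q ii jj z = (\<lambda>v. if v < q then z v else mps_deriv (jj (v - q)) (z (ii (v - q))))"

end

theory Submission
  imports Defs "HOL-Library.Countable"
begin
definition mon :: "(nat\<Rightarrow>nat) \<Rightarrow> (nat\<Rightarrow>'a::comm_ring_1) \<Rightarrow> 'a" where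
  "mon m u = (\<Prod>v\<in>{v. m v \<noteq> 0}. u v ^ m v)"

definition polyfn :: "((nat\<Rightarrow>'a::comm_ring_1) \<Rightarrow> 'a) \<Rightarrow> bool" where
  "polyfn f \<longleftrightarrow> (\<exists>p. is_cpoly p \<and> f = cpoly_eval p)"

lemma mon_ext:
  assumes "finite S" "{v. m v \<noteq> 0} \<subseteq> S"
  shows "mon m u = (\<Prod>v\<in>S. u v ^ m v)"
  unfolding mon_def using assms by (intro prod.mono_neutral_left) auto

lemma mon_add:
  assumes "finite {v. m1 v \<noteq> 0}" "finite {v. m2 v \<noteq> 0}"
  shows "mon (\<lambda>v. m1 v + m2 v) u = mon m1 u * mon m2 u"
proof -
  let ?S = "{v. m1 v \<noteq> 0} \<union> {v. m2 v \<noteq> 0}"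
  have f: "finite ?S" using assms by auto
  have "mon (\<lambda>v. m1 v + m2 v) u = (\<Prod>v\<in>?S. u v ^ (m1 v + m2 v))"
    by (rule mon_ext) (use f in auto)
  also have "\<dots> = (\<Prod>v\<in>?S. u v ^ m1 v) * (\<Prod>v\<in>?S. u v ^ m2 v)"
    by (simp add: power_add prod.distrib)
  also have "\<dots> = mon m1 u * mon m2 u"
  proof -
    have "mon m1 u = (\<Prod>v\<in>?S. u v ^ m1 v)" by (rule mon_ext[OF f]) auto
    moreover have "mon m2 u = (\<Prod>v\<in>?S. u v ^ m2 v)" by (rule mon_ext[OF f]) auto
    ultimately show ?thesis by simp
  qed
  finally show ?thesis .
qed

lemma polyfn_gen:
  assumes "finite I" "\<forall>i\<in>I. finite {v. g i v \<noteq> 0}"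
  shows "polyfn (\<lambda>u. \<Sum>i\<in>I. c i * mon (g i) u)"
proof -
  define p where "p m = (\<Sum>i\<in>{i\<in>I. g i = m}. c i)" for m
  have sub: "{m. p m \<noteq> 0} \<subseteq> g ` I"
  proof
    fix m assume "m \<in> {m. p m \<noteq> 0}"
    then have "{i\<in>I. g i = m} \<noteq> {}" unfolding p_def by (metis (mono_tags, lifting) mem_Collect_eq sum.empty)
    then show "m \<in> g ` I" by auto
  qed
  have fin: "finite {m. p m \<noteq> 0}" using sub assms(1) finite_subset by blast
  have cp: "is_cpoly p" unfolding is_cpoly_def using fin sub assms(2) by blast
  have "cpoly_eval p u = (\<Sum>i\<in>I. c i * mon (g i) u)" for u
  proof -
    have "cpoly_eval p u = (\<Sum>m\<in>{m. p m \<noteq> 0}. p m * mon m u)"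
      unfolding cpoly_eval_def mon_def by simp
    also have "\<dots> = (\<Sum>m\<in>g ` I. p m * mon m u)"
      by (rule sum.mono_neutral_left) (use sub assms in auto)
    also have "\<dots> = (\<Sum>m\<in>g ` I. \<Sum>i\<in>{i\<in>I. g i = m}. c i * mon (g i) u)"
      unfolding p_def sum_distrib_right by (intro sum.cong refl) auto
    also have "\<dots> = (\<Sum>i\<in>I. c i * mon (g i) u)"
      by (rule sum.group) (use assms in auto)
    finally show ?thesis .
  qed
  then have "(\<lambda>u. \<Sum>i\<in>I. c i * mon (g i) u) = cpoly_eval p" by (intro ext) simp
  then show ?thesis unfolding polyfn_def using cp by blast
qed

lemma cpoly_rep: "cpoly_eval p = (\<lambda>u. \<Sum>m\<in>{m. p m \<noteq> 0}. p m * mon m u)"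
  unfolding cpoly_eval_def mon_def by simp

lemma polyfn_add:
  assumes "polyfn f" "polyfn g" shows "polyfn (\<lambda>u. f u + g u)"
proof -
  obtain p1 p2 where p: "is_cpoly p1" "f = cpoly_eval p1" "is_cpoly p2" "g = cpoly_eval p2"
    using assms unfolding polyfn_def by blast
  let ?I = "{m. p1 m \<noteq> 0} <+> {m. p2 m \<noteq> 0}"
  have "polyfn (\<lambda>u. \<Sum>i\<in>?I. case_sum p1 p2 i * mon (case_sum id id i) u)"
    by (rule polyfn_gen) (use p in \<open>auto simp: is_cpoly_def\<close>)
  moreover have "(\<lambda>u. \<Sum>i\<in>?I. case_sum p1 p2 i * mon (case_sum id id i) u) = (\<lambda>u. f u + g u)"
    using p by (simp add: sum.Plus is_cpoly_def cpoly_rep o_def)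
  ultimately show ?thesis by simp
qed

lemma polyfn_mult:
  assumes "polyfn f" "polyfn g" shows "polyfn (\<lambda>u. f u * g u)"
proof -
  obtain p1 p2 where p: "is_cpoly p1" "f = cpoly_eval p1" "is_cpoly p2" "g = cpoly_eval p2"
    using assms unfolding polyfn_def by blast
  let ?I = "{m. p1 m \<noteq> 0} \<times> {m. p2 m \<noteq> 0}"
  have "polyfn (\<lambda>u. \<Sum>i\<in>?I. (p1 (fst i) * p2 (snd i)) * mon (\<lambda>v. fst i v + snd i v) u)"
    by (rule polyfn_gen) (use p in \<open>auto simp: is_cpoly_def\<close>)
  moreover have "(\<lambda>u. \<Sum>i\<in>?I. (p1 (fst i) * p2 (snd i)) * mon (\<lambda>v. fst i v + snd i v) u) = (\<lambda>u. f u * g u)"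
  proof
    fix u
    have "(\<Sum>i\<in>?I. (p1 (fst i) * p2 (snd i)) * mon (\<lambda>v. fst i v + snd i v) u)
        = (\<Sum>i\<in>?I. (p1 (fst i) * mon (fst i) u) * (p2 (snd i) * mon (snd i) u))"
      by (intro sum.cong refl) (use p in \<open>auto simp: is_cpoly_def mon_add\<close>)
    also have "\<dots> = f u * g u"
      using p by (simp add: sum_product sum.cartesian_product cpoly_rep case_prod_beta)
    finally show "(\<Sum>i\<in>?I. (p1 (fst i) * p2 (snd i)) * mon (\<lambda>v. fst i v + snd i v) u) = f u * g u" .
  qed
  ultimately show ?thesis by simp
qed

lemma polyfn_const: "polyfn (\<lambda>u. k)"
proof -
  have "polyfn (\<lambda>u. \<Sum>i\<in>{()}. k * mon (\<lambda>_. 0) u)" by (rule polyfn_gen) auto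
  then show ?thesis by (simp add: mon_def)
qed

lemma polyfn_var: "polyfn (\<lambda>u. u v)"
proof -
  have "polyfn (\<lambda>u. \<Sum>i\<in>{()}. 1 * mon (\<lambda>w. if w = v then 1 else 0) u)" by (rule polyfn_gen) auto
  moreover have "{w. (if w = v then 1 else 0::nat) \<noteq> 0} = {v}" by auto
  ultimately show ?thesis by (simp add: mon_def)
qed

lemma polyfn_diff: "polyfn f \<Longrightarrow> polyfn g \<Longrightarrow> polyfn (\<lambda>u. f u - g u)"
proof -
  assume a: "polyfn f" "polyfn g"
  have "polyfn (\<lambda>u. f u + (-1) * g u)"
    by (intro polyfn_add polyfn_mult polyfn_const a)
  then show ?thesis by simp
qed

lemma polyfn_sum: assumes "\<And>i. i \<in> I \<Longrightarrow> polyfn (f i)" shows "polyfn (\<lambda>u. \<Sum>i\<in>I. f i u)"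
proof (cases "finite I")
  case True
  then show ?thesis using assms
    by (induction I rule: finite_induct) (auto intro: polyfn_add polyfn_const)
next
  case False then show ?thesis by (simp add: polyfn_const)
qed

definition pcoef :: "((nat\<Rightarrow>'a) \<Rightarrow> ('n::finite,'a::comm_ring_1) mps) \<Rightarrow> bool" where
  "pcoef Y \<longleftrightarrow> (\<forall>a. polyfn (\<lambda>u. Y u a))"

lemma pcoef_const: "pcoef (\<lambda>u. f)" by (simp add: pcoef_def polyfn_const)

lemma pcoef_mult: assumes "pcoef Y1" "pcoef Y2" shows "pcoef (\<lambda>u. mps_mult (Y1 u) (Y2 u))"
  unfolding pcoef_def mps_mult_def
proof
  fix a
  show "polyfn (\<lambda>u. \<Sum>b\<in>{b. \<forall>i. b i \<le> a i}. Y1 u b * Y2 u (\<lambda>i. a i - b i))"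
    by (rule polyfn_sum, rule polyfn_mult) (use assms in \<open>auto simp: pcoef_def\<close>)
qed

lemma pcoef_pow: assumes "pcoef Y" shows "pcoef (\<lambda>u. mps_pow (Y u) k)"
  by (induction k) (simp_all add: pcoef_const pcoef_mult assms)

lemma pcoef_foldr: assumes "\<And>v. pcoef (\<lambda>u. y u v)"
  shows "pcoef (\<lambda>u. foldr (\<lambda>v acc. mps_mult (mps_pow (y u v) (e v)) acc) xs mps_one)"
  by (induction xs) (simp_all add: pcoef_const pcoef_mult pcoef_pow assms)

lemma pcoef_eval: assumes "\<And>v. pcoef (\<lambda>u. y u v)"
  shows "pcoef (\<lambda>u. mps_poly_eval m P (y u))"
  unfolding pcoef_def mps_poly_eval_def
proof
  fix a
  have "pcoef (\<lambda>u. mps_mult (P e) (mps_monomial m (y u) e))" for e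
    unfolding mps_monomial_def by (intro pcoef_mult pcoef_const pcoef_foldr assms)
  then show "polyfn (\<lambda>u. \<Sum>e\<in>{e. P e \<noteq> mps_zero}. mps_mult (P e) (mps_monomial m (y u) e) a)"
    by (intro polyfn_sum) (simp add: pcoef_def)
qed

definition Zof :: "(nat \<Rightarrow> 'a) \<Rightarrow> nat \<Rightarrow> ('n::finite, 'a) mps" where
  "Zof u = (\<lambda>i a. u (to_nat (Inl (i, a) :: (nat \<times> ('n\<Rightarrow>nat)) + (nat \<times> ('n\<Rightarrow>nat)))))"

definition Lof :: "(nat \<Rightarrow> 'a) \<Rightarrow> nat \<Rightarrow> ('n::finite \<Rightarrow> nat) \<Rightarrow> 'a" where
  "Lof u = (\<lambda>k a. u (to_nat (Inr (k, a) :: (nat \<times> ('n\<Rightarrow>nat)) + (nat \<times> ('n\<Rightarrow>nat)))))"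

lemma pcoef_Z: "pcoef (\<lambda>u. (Zof u i :: ('n::finite, 'a::comm_ring_1) mps))"
  unfolding pcoef_def Zof_def by (simp add: polyfn_var)

lemma pcoef_sys: "pcoef (\<lambda>u. sys_args q ii jj (Zof u :: nat \<Rightarrow> ('n::finite, 'a::comm_ring_1) mps) v)"
proof (cases "v < q")
  case True then show ?thesis by (simp add: sys_args_def pcoef_Z)
next
  case False then show ?thesis
    unfolding sys_args_def pcoef_def mps_deriv_def Zof_def
    by (simp add: polyfn_mult polyfn_const polyfn_var)
qed

lemma pcoef_sys_eval: "polyfn (\<lambda>u. mps_poly_eval m P (sys_args q ii jj (Zof u :: nat \<Rightarrow> ('n::finite, 'a::comm_ring_1) mps)) a)"
  using pcoef_eval[of "\<lambda>u. sys_args q ii jj (Zof u)", OF pcoef_sys] unfolding pcoef_def by blast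

lemma polyfn_sys: "polyfn (\<lambda>u. sys_args q ii jj (Zof u :: nat \<Rightarrow> ('n::finite, 'a::comm_ring_1) mps) k a)"
  using pcoef_sys unfolding pcoef_def by blast

lemma polyfn_Lof: "polyfn (\<lambda>u. (Lof u k (a::'n::finite \<Rightarrow> nat) :: 'a::comm_ring_1))"
  unfolding Lof_def by (rule polyfn_var)

lemma ord_iff: "mps_ord (w :: ('n::finite,'a::zero) mps) = enat c \<longleftrightarrow>
   (\<forall>a. deg a < c \<longrightarrow> w a = 0) \<and> (\<exists>a. deg a = c \<and> w a \<noteq> 0)"
proof
  assume h: "mps_ord w = enat c"
  then have nz: "w \<noteq> mps_zero" by (auto simp: mps_ord_def)
  then obtain a0 where "w a0 \<noteq> 0" by (auto simp: mps_zero_def)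
  then have ex: "\<exists>d a. w a \<noteq> 0 \<and> deg a = d" by blast
  have c: "c = (LEAST d. \<exists>a. w a \<noteq> 0 \<and> deg a = d)" using h nz by (simp add: mps_ord_def)
  have "\<exists>a. w a \<noteq> 0 \<and> deg a = c" unfolding c by (rule LeastI_ex[OF ex])
  moreover have "\<forall>a. deg a < c \<longrightarrow> w a = 0"
    using not_less_Least[of _ "\<lambda>d. \<exists>a. w a \<noteq> 0 \<and> deg a = d"] unfolding c by blast
  ultimately show "(\<forall>a. deg a < c \<longrightarrow> w a = 0) \<and> (\<exists>a. deg a = c \<and> w a \<noteq> 0)" by blast
next
  assume h: "(\<forall>a. deg a < c \<longrightarrow> w a = 0) \<and> (\<exists>a. deg a = c \<and> w a \<noteq> 0)"
  then have nz: "w \<noteq> mps_zero" by (auto simp: mps_zero_def)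
  have "(LEAST d. \<exists>a. w a \<noteq> 0 \<and> deg a = d) = c"
  proof (rule Least_equality)
    show "\<exists>a. w a \<noteq> 0 \<and> deg a = c" using h by blast
    show "\<And>y. \<exists>a. w a \<noteq> 0 \<and> deg a = y \<Longrightarrow> c \<le> y" using h by (meson not_le)
  qed
  then show "mps_ord w = enat c" using nz by (simp add: mps_ord_def)
qed

lemma deg_ge: "a i \<le> deg (a :: 'n::finite \<Rightarrow> nat)"
  unfolding deg_def by (rule member_le_sum) auto

lemma finite_deg: "finite {a :: 'n::finite \<Rightarrow> nat. deg a = c}"
proof -
  have "finite {f :: 'n \<Rightarrow> nat. \<forall>x. (x \<in> UNIV \<longrightarrow> f x \<in> {..c}) \<and> (x \<notin> UNIV \<longrightarrow> f x = 0)}"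
    by (rule finite_set_of_finite_funs) auto
  moreover have "{a :: 'n \<Rightarrow> nat. deg a = c} \<subseteq> {f. \<forall>x. (x \<in> UNIV \<longrightarrow> f x \<in> {..c}) \<and> (x \<notin> UNIV \<longrightarrow> f x = 0)}"
    using deg_ge by fastforce
  ultimately show ?thesis by (rule finite_subset[rotated])
qed

lemma wit: assumes "finite D"
  shows "(\<exists>a\<in>D. w a \<noteq> 0) \<longleftrightarrow> (\<exists>lam. (\<Sum>a\<in>D. lam a * w a) = (1::'a::field))"
proof
  assume "\<exists>a\<in>D. w a \<noteq> 0"
  then obtain a where a: "a \<in> D" "w a \<noteq> 0" by blast
  define lam where "lam b = (if b = a then inverse (w a) else 0)" for b
  have "(\<Sum>b\<in>D. lam b * w b) = (\<Sum>b\<in>D. if b = a then inverse (w a) * w a else 0)"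
    by (intro sum.cong) (auto simp: lam_def)
  also have "\<dots> = 1" using a assms by simp
  finally show "\<exists>lam. (\<Sum>a\<in>D. lam a * w a) = 1" by blast
next
  assume "\<exists>lam. (\<Sum>a\<in>D. lam a * w a) = (1::'a)"
  then obtain lam where l: "(\<Sum>a\<in>D. lam a * w a) = 1" by blast
  show "\<exists>a\<in>D. w a \<noteq> 0"
  proof (rule ccontr)
    assume "\<not> (\<exists>a\<in>D. w a \<noteq> 0)"
    then have "(\<Sum>a\<in>D. lam a * w a) = 0" by simp
    with l show False by simp
  qed
qed

lemma compact:
  assumes "aleph0_complete TYPE('a::field)" "countable E" "\<forall>f\<in>E. polyfn f"
    "\<forall>T\<subseteq>E. finite T \<longrightarrow> (\<exists>u. \<forall>f\<in>T. f u = 0)"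
  shows "\<exists>u. \<forall>f\<in>E. f u = (0::'a)"
proof -
  define rep where "rep f = (SOME p. is_cpoly p \<and> f = cpoly_eval p)" for f :: "(nat \<Rightarrow> 'a) \<Rightarrow> 'a"
  have rep: "is_cpoly (rep f) \<and> f = cpoly_eval (rep f)" if "f \<in> E" for f
    unfolding rep_def using assms(3) that unfolding polyfn_def by (metis (mono_tags, lifting) someI_ex)
  let ?S = "rep ` E"
  have cS: "countable ?S" using assms(2) by simp
  have pS: "\<forall>p\<in>?S. is_cpoly p" using rep by blast
  have fin: "\<forall>T\<subseteq>?S. finite T \<longrightarrow> (\<exists>u. \<forall>p\<in>T. cpoly_eval p u = 0)"
  proof (intro allI impI)
    fix T assume T: "T \<subseteq> ?S" "finite T"
    then obtain E' where E': "E' \<subseteq> E" "finite E'" "T = rep ` E'"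
      by (meson finite_subset_image)
    then obtain u where u: "\<forall>f\<in>E'. f u = 0" using assms(4) by blast
    have "\<forall>p\<in>T. cpoly_eval p u = 0"
      using E' u rep by (metis (no_types, lifting) image_iff subsetD)
    then show "\<exists>u. \<forall>p\<in>T. cpoly_eval p u = 0" by blast
  qed
  have "\<exists>u. \<forall>p\<in>?S. cpoly_eval p u = 0"
    using assms(1) cS pS fin unfolding aleph0_complete_def by blast
  then obtain u where "\<forall>p\<in>?S. cpoly_eval p u = 0" by blast
  then have "\<forall>f\<in>E. f u = 0" using rep by (metis image_eqI)
  then show ?thesis by blast
qed

lemma ord_split: "(\<forall>k<q+s. PP (sys_args q ii jj z k) k) \<longleftrightarrow>
   (\<forall>i<q. PP (z i) i) \<and> (\<forall>k<s. PP (mps_deriv (jj k) (z (ii k))) (q+k))"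
proof
  assume h: "\<forall>k<q+s. PP (sys_args q ii jj z k) k"
  have "\<forall>i<q. PP (z i) i"
  proof (intro allI impI)
    fix i assume "i < q" then show "PP (z i) i" using h[rule_format, of i] by (simp add: sys_args_def)
  qed
  moreover have "\<forall>k<s. PP (mps_deriv (jj k) (z (ii k))) (q+k)"
  proof (intro allI impI)
    fix k assume "k < s" then show "PP (mps_deriv (jj k) (z (ii k))) (q+k)"
      using h[rule_format, of "q+k"] by (simp add: sys_args_def)
  qed
  ultimately show "(\<forall>i<q. PP (z i) i) \<and> (\<forall>k<s. PP (mps_deriv (jj k) (z (ii k))) (q+k))" by blast
next
  assume h: "(\<forall>i<q. PP (z i) i) \<and> (\<forall>k<s. PP (mps_deriv (jj k) (z (ii k))) (q+k))"
  show "\<forall>k<q+s. PP (sys_args q ii jj z k) k"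
  proof (intro allI impI)
    fix k assume k: "k < q+s"
    show "PP (sys_args q ii jj z k) k"
    proof (cases "k < q")
      case True then show ?thesis using h by (simp add: sys_args_def)
    next
      case False
      then have "k - q < s" "q + (k - q) = k" using k by auto
      then show ?thesis using h False by (metis sys_args_def)
    qed
  qed
qed

theorem corollary4p3:
  fixes F :: "((nat \<Rightarrow> nat) \<Rightarrow> ('n::finite, 'a::field) mps) set"
    and q s :: nat
    and ii :: "nat \<Rightarrow> nat"
    and jj :: "nat \<Rightarrow> 'n \<Rightarrow> nat"
  assumes "aleph0_complete TYPE('a)"
    and "finite F"
    and "\<forall>P\<in>F. is_mps_poly (q + s) P"
    and "\<forall>k<s. ii k < q"
  shows "\<exists>\<tau> :: (nat \<Rightarrow> nat) \<Rightarrow> nat. \<forall>(c :: nat \<Rightarrow> nat) (z' :: nat \<Rightarrow> ('n, 'a) mps).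
     (\<forall>P\<in>F. mps_in_max_pow (mps_poly_eval (q + s) P (sys_args q ii jj z')) (\<tau> c))
     \<and> (\<forall>i<q. mps_ord (z' i) = enat (c i))
     \<and> (\<forall>k<s. mps_ord (mps_deriv (jj k) (z' (ii k))) = enat (c (q + k)))
     \<longrightarrow> (\<exists>z :: nat \<Rightarrow> ('n, 'a) mps.
           (\<forall>P\<in>F. mps_poly_eval (q + s) P (sys_args q ii jj z) = mps_zero)
           \<and> (\<forall>i<q. mps_ord (z i) = enat (c i))
           \<and> (\<forall>k<s. mps_ord (mps_deriv (jj k) (z (ii k))) = enat (c (q + k))))"
proof -
  define E1 where "E1 N = (\<lambda>(P,a) (u::nat\<Rightarrow>'a). mps_poly_eval (q+s) P (sys_args q ii jj (Zof u)) a)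
      ` {(P,a::'n\<Rightarrow>nat). P\<in>F \<and> deg a < N}" for N
  define E2 where "E2 c = (\<lambda>(k,a) (u::nat\<Rightarrow>'a). sys_args q ii jj (Zof u :: nat \<Rightarrow> ('n,'a) mps) k a)
      ` {(k,a::'n\<Rightarrow>nat). k < q+s \<and> deg a < c k}" for c :: "nat \<Rightarrow> nat"
  define E3 where "E3 c = (\<lambda>k (u::nat\<Rightarrow>'a). (\<Sum>a\<in>{a::'n\<Rightarrow>nat. deg a = c k}.
        Lof u k a * sys_args q ii jj (Zof u :: nat \<Rightarrow> ('n,'a) mps) k a) - 1) ` {..<q+s}" for c :: "nat \<Rightarrow> nat"
  define E where "E c N = E1 N \<union> E2 c \<union> E3 c" for c N
  define Eall where "Eall c = (\<Union>N. E c N)" for c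

  have zeroE: "(\<forall>f\<in>E c N. f u = 0) \<longleftrightarrow>
     (\<forall>P\<in>F. \<forall>a. deg a < N \<longrightarrow> mps_poly_eval (q+s) P (sys_args q ii jj (Zof u)) a = 0) \<and>
     (\<forall>k<q+s. \<forall>a. deg a < c k \<longrightarrow> sys_args q ii jj (Zof u :: nat \<Rightarrow> ('n,'a) mps) k a = 0) \<and>
     (\<forall>k<q+s. (\<Sum>a\<in>{a::'n\<Rightarrow>nat. deg a = c k}. Lof u k a * sys_args q ii jj (Zof u :: nat \<Rightarrow> ('n,'a) mps) k a) = 1)"
    for c N u
  proof -
    have b1: "(\<forall>f\<in>E1 N. f u = 0) \<longleftrightarrow> (\<forall>P\<in>F. \<forall>a. deg a < N \<longrightarrow> mps_poly_eval (q+s) P (sys_args q ii jj (Zof u)) a = 0)"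
      unfolding E1_def Ball_image_comp o_def by auto
    have b2: "(\<forall>f\<in>E2 c. f u = 0) \<longleftrightarrow> (\<forall>k<q+s. \<forall>a. deg a < c k \<longrightarrow> sys_args q ii jj (Zof u :: nat \<Rightarrow> ('n,'a) mps) k a = 0)"
      unfolding E2_def Ball_image_comp o_def by auto
    have b3: "(\<forall>f\<in>E3 c. f u = 0) \<longleftrightarrow> (\<forall>k<q+s. (\<Sum>a\<in>{a::'n\<Rightarrow>nat. deg a = c k}. Lof u k a * sys_args q ii jj (Zof u :: nat \<Rightarrow> ('n,'a) mps) k a) = 1)"
      unfolding E3_def Ball_image_comp o_def by auto
    show ?thesis unfolding E_def ball_Un b1 b2 b3 by blast
  qed
  have polyE: "\<forall>f\<in>Eall c. polyfn f" for c
    unfolding Eall_def E_def E1_def E2_def E3_def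
    by (auto intro!: pcoef_sys_eval polyfn_sys polyfn_diff polyfn_sum polyfn_mult polyfn_Lof polyfn_const)
  have cU: "countable (UNIV :: ('n \<Rightarrow> nat) set)" by simp
  have countE: "countable (Eall c)" for c
  proof -
    have "countable (E1 N)" for N
    proof -
      have "{(P,a::'n\<Rightarrow>nat). P\<in>F \<and> deg a < N} \<subseteq> F \<times> UNIV" by auto
      moreover have "countable (F \<times> (UNIV :: ('n \<Rightarrow> nat) set))"
        using assms(2) cU by (simp add: countable_finite)
      ultimately show ?thesis unfolding E1_def by (meson countable_image countable_subset)
    qed
    moreover have "countable (E2 c)"
    proof -
      have "{(k,a::'n\<Rightarrow>nat). k < q+s \<and> deg a < c k} \<subseteq> UNIV" by auto
      moreover have "countable (UNIV :: (nat \<times> ('n \<Rightarrow> nat)) set)" by simp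
      ultimately show ?thesis unfolding E2_def by (meson countable_image countable_subset)
    qed
    moreover have "countable (E3 c)" unfolding E3_def by simp
    ultimately show ?thesis unfolding Eall_def E_def by auto
  qed
  have monoE: "E c N \<subseteq> E c M" if "N \<le> M" for c N M
    using that unfolding E_def E1_def by auto
  have chain: "finite T \<Longrightarrow> T \<subseteq> Eall c \<Longrightarrow> \<exists>N. T \<subseteq> E c N" for T c
  proof (induction T rule: finite_induct)
    case empty then show ?case by blast
  next
    case (insert x T)
    then obtain N1 where "T \<subseteq> E c N1" by blast
    moreover obtain N2 where "x \<in> E c N2" using insert.prems unfolding Eall_def by blast
    ultimately have "insert x T \<subseteq> E c (max N1 N2)"
      using monoE[of N1 "max N1 N2" c] monoE[of N2 "max N1 N2" c] by auto
    then show ?case by blast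
  qed
  define \<tau> where "\<tau> c = (if \<exists>N. \<not> (\<exists>u. \<forall>f\<in>E c N. f u = 0) then (SOME N. \<not> (\<exists>u. \<forall>f\<in>E c N. f u = 0)) else 0)" for c
  show ?thesis
  proof (intro exI[of _ \<tau>] allI impI)
    fix c :: "nat \<Rightarrow> nat" and z' :: "nat \<Rightarrow> ('n, 'a) mps"
    assume H: "(\<forall>P\<in>F. mps_in_max_pow (mps_poly_eval (q + s) P (sys_args q ii jj z')) (\<tau> c))
     \<and> (\<forall>i<q. mps_ord (z' i) = enat (c i))
     \<and> (\<forall>k<s. mps_ord (mps_deriv (jj k) (z' (ii k))) = enat (c (q + k)))"
    have ordk: "\<forall>k<q+s. mps_ord (sys_args q ii jj z' k) = enat (c k)"
      using H ord_split[of q s "\<lambda>w k. mps_ord w = enat (c k)" ii jj z'] by simp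
    show "\<exists>z :: nat \<Rightarrow> ('n, 'a) mps.
           (\<forall>P\<in>F. mps_poly_eval (q + s) P (sys_args q ii jj z) = mps_zero)
           \<and> (\<forall>i<q. mps_ord (z i) = enat (c i))
           \<and> (\<forall>k<s. mps_ord (mps_deriv (jj k) (z (ii k))) = enat (c (q + k)))"
    proof (cases "\<exists>u. \<forall>f\<in>Eall c. f u = 0")
      case True
      then obtain u where u: "\<forall>N. \<forall>f\<in>E c N. f u = 0" unfolding Eall_def by blast
      let ?z = "Zof u :: nat \<Rightarrow> ('n, 'a) mps"
      have "\<forall>P\<in>F. mps_poly_eval (q + s) P (sys_args q ii jj ?z) = mps_zero"
      proof (intro ballI ext)
        fix P a assume "P \<in> F"
        show "mps_poly_eval (q + s) P (sys_args q ii jj ?z) a = mps_zero a"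
        proof -
          have "\<forall>f\<in>E c (Suc (deg a)). f u = 0" using u by blast
          then show ?thesis using \<open>P \<in> F\<close> unfolding zeroE by (simp add: mps_zero_def)
        qed
      qed
      moreover have "\<forall>k<q+s. mps_ord (sys_args q ii jj ?z k) = enat (c k)"
      proof (intro allI impI)
        fix k assume k: "k < q+s"
        have e: "(\<forall>a. deg a < c k \<longrightarrow> sys_args q ii jj ?z k a = 0)"
          "(\<Sum>a\<in>{a::'n\<Rightarrow>nat. deg a = c k}. Lof u k a * sys_args q ii jj ?z k a) = 1"
        proof -
          have "\<forall>f\<in>E c 0. f u = 0" using u by blast
          then show "\<forall>a. deg a < c k \<longrightarrow> sys_args q ii jj ?z k a = 0"
            "(\<Sum>a\<in>{a::'n\<Rightarrow>nat. deg a = c k}. Lof u k a * sys_args q ii jj ?z k a) = 1"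
            using k unfolding zeroE by auto
        qed
        then have "\<exists>a\<in>{a::'n\<Rightarrow>nat. deg a = c k}. sys_args q ii jj ?z k a \<noteq> 0"
          using wit[OF finite_deg] by blast
        then show "mps_ord (sys_args q ii jj ?z k) = enat (c k)"
          using e(1) ord_iff by blast
      qed
      then have "(\<forall>i<q. mps_ord (?z i) = enat (c i))
           \<and> (\<forall>k<s. mps_ord (mps_deriv (jj k) (?z (ii k))) = enat (c (q + k)))"
        using ord_split[of q s "\<lambda>w k. mps_ord w = enat (c k)" ii jj ?z] by simp
      ultimately show ?thesis by blast
    next
      case False
      then have "\<not> (\<forall>T\<subseteq>Eall c. finite T \<longrightarrow> (\<exists>u. \<forall>f\<in>T. f u = 0))"
        using compact[OF assms(1) countE polyE] by blast
      then obtain T where T: "T \<subseteq> Eall c" "finite T" "\<not> (\<exists>u. \<forall>f\<in>T. f u = 0)" by blast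
      then obtain N where "T \<subseteq> E c N" using chain by blast
      then have ex: "\<exists>N. \<not> (\<exists>u. \<forall>f\<in>E c N. f u = 0)" using T(3) by blast
      then have nz: "\<not> (\<exists>u. \<forall>f\<in>E c (\<tau> c). f u = 0)"
        unfolding \<tau>_def using someI_ex[OF ex] ex by simp
      define lam where "lam k = (SOME lam. (\<Sum>a\<in>{a::'n\<Rightarrow>nat. deg a = c k}. lam a * sys_args q ii jj z' k a) = 1)" for k
      have lam: "(\<Sum>a\<in>{a::'n\<Rightarrow>nat. deg a = c k}. lam k a * sys_args q ii jj z' k a) = 1" if "k < q+s" for k
      proof -
        have "\<exists>a\<in>{a::'n\<Rightarrow>nat. deg a = c k}. sys_args q ii jj z' k a \<noteq> 0"
          using ordk that ord_iff by blast
        then have "\<exists>lam. (\<Sum>a\<in>{a::'n\<Rightarrow>nat. deg a = c k}. lam a * sys_args q ii jj z' k a) = 1"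
          using wit[OF finite_deg] by blast
        then show ?thesis unfolding lam_def by (rule someI_ex)
      qed
      define u0 where "u0 n = (case (from_nat n :: (nat \<times> ('n\<Rightarrow>nat)) + (nat \<times> ('n\<Rightarrow>nat))) of
           Inl (i,a) \<Rightarrow> z' i a | Inr (k,a) \<Rightarrow> lam k a)" for n
      have Z0: "(Zof u0 :: nat \<Rightarrow> ('n, 'a) mps) = z'"
        unfolding Zof_def u0_def by (intro ext) simp
      have L0: "Lof u0 = lam"
        unfolding Lof_def u0_def by (intro ext) simp
      have "\<forall>f\<in>E c (\<tau> c). f u0 = 0"
        unfolding zeroE Z0 L0
      proof (intro conjI)
        show "\<forall>P\<in>F. \<forall>a. deg a < \<tau> c \<longrightarrow> mps_poly_eval (q+s) P (sys_args q ii jj z') a = 0"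
          using H unfolding mps_in_max_pow_def by blast
        show "\<forall>k<q+s. \<forall>a. deg a < c k \<longrightarrow> sys_args q ii jj z' k a = 0"
          using ordk ord_iff by blast
        show "\<forall>k<q+s. (\<Sum>a\<in>{a::'n\<Rightarrow>nat. deg a = c k}. lam k a * sys_args q ii jj z' k a) = 1"
          using lam by blast
      qed
      with nz show ?thesis by blast
    qed
  qed
qed

end
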